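(* Let $p\in(p_0,1/2)$ and $a\in(0,0.01)$ be constants, where $p_0$ is the real root of $4x^3-7x^2+5x-1$, and let $k$ be such that $ak$ is an even integer. For $K\subseteq[n]$ with $|K|=k$ let $M_K$ be the event that the subgraph of $G_{n,p}$ induced on $K$ belongs to $\mathcal{F}_k$ (for some choice of partitions). Then for every integer $i\le(1-10a)k$ and all $K,K'\in\binom{[n]}{k}$ with $|K\cap K'|=i$, $$\mathbb{P}[M_K\cap M_{K'}]\le(1-p)^{-(0.5-2a)ki}\,\big(\mathbb{P}[M_K]\big)^2.$$
   Context: A graph $F$ on a $k$-set $K$ is in $\mathcal{F}'_k$ if there are partitions $K=A\cup B$ and $A=A_1\cup\dots\cup A_r$ with $|A|=ak$, $|B|=(1-a)k$, $r=ak/2$, $|A_i|=2$, such that (1) $F$ is bipartite with parts $A$ and $B$, and (2) for every $i$ and every $\beta\in B$, $\beta$ is adjacent either to both vertices of $A_i$ or to neither. $F$ is in $\mathcal{F}_k$ if additionally, for such partitions, (3) every vertex of $A$ has degree at least $0.15k$, and (4) for all $i\ne j$ the symmetric difference of the neighborhoods of $A_i$ and $A_j$ has size at least $0.25k$. *)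

theory Defs
  imports Complex_Main
begin

text \<open>Graphs on the vertex set [n] = {0..<n} are represented by their edge sets,
  edges being 2-element sets of vertices.\<close>

definition all_edges :: "nat \<Rightarrow> nat set set" where
  "all_edges n = {e. \<exists>x y. x < n \<and> y < n \<and> x \<noteq> y \<and> e = {x, y}}"

definition gnp_prob :: "nat \<Rightarrow> real \<Rightarrow> (nat set set \<Rightarrow> bool) \<Rightarrow> real" where
  "gnp_prob n p Ev =
     (\<Sum>E \<in> {E. E \<subseteq> all_edges n \<and> Ev E}.
        p ^ card E * (1 - p) ^ (card (all_edges n) - card E))"

definition nbhd :: "nat set set \<Rightarrow> nat set \<Rightarrow> nat set \<Rightarrow> nat set" where
  "nbhd E K S = {u \<in> K. \<exists>v \<in> S. {u, v} \<in> E \<and> u \<noteq> v}"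

text \<open>The partition of A into pairs is represented by the set P of its blocks.\<close>

definition in_F :: "real \<Rightarrow> nat \<Rightarrow> nat set set \<Rightarrow> nat set \<Rightarrow> bool" where
  "in_F a k E K \<longleftrightarrow>
     (\<exists>A P. A \<subseteq> K \<and> real (card A) = a * real k \<and>
        real (card (K - A)) = (1 - a) * real k \<and>
        real (card P) = a * real k / 2 \<and>
        (\<forall>S \<in> P. S \<subseteq> A \<and> card S = 2) \<and> \<Union>P = A \<and>
        (\<forall>S \<in> P. \<forall>T \<in> P. S \<noteq> T \<longrightarrow> S \<inter> T = {}) \<and>
        \<comment> \<open>(1) bipartite with parts A and B = K - A\<close>
        (\<forall>x \<in> K. \<forall>y \<in> K. {x, y} \<in> E \<and> x \<noteq> y \<longrightarrow>
            (x \<in> A \<and> y \<in> K - A) \<or> (x \<in> K - A \<and> y \<in> A)) \<and>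
        \<comment> \<open>(2) each vertex of B sees both or neither vertex of each pair\<close>
        (\<forall>S \<in> P. \<forall>\<beta> \<in> K - A. (\<forall>x \<in> S. {x, \<beta>} \<in> E) \<or> (\<forall>x \<in> S. {x, \<beta>} \<notin> E)) \<and>
        \<comment> \<open>(3) minimum degree on A\<close>
        (\<forall>v \<in> A. real (card (nbhd E K {v})) \<ge> 0.15 * real k) \<and>
        \<comment> \<open>(4) neighbourhoods of distinct pairs differ a lot\<close>
        (\<forall>S \<in> P. \<forall>T \<in> P. S \<noteq> T \<longrightarrow>
            real (card ((nbhd E K S - nbhd E K T) \<union> (nbhd E K T - nbhd E K S))) \<ge> 0.25 * real k))"

end

theory Submission
  imports Defs
begin


definition wt :: "real \<Rightarrow> nat set set \<Rightarrow> nat set set \<Rightarrow> real" where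
  "wt p W F = p ^ card F * (1 - p) ^ (card W - card F)"

definition EK :: "nat set \<Rightarrow> nat set set" where
  "EK K = {e. e \<subseteq> K \<and> card e = 2}"

lemma wt_split:
  assumes "finite W1" "finite W2" "W1 \<inter> W2 = {}" "F1 \<subseteq> W1" "F2 \<subseteq> W2"
  shows "wt p (W1 \<union> W2) (F1 \<union> F2) = wt p W1 F1 * wt p W2 F2"
proof -
  have f: "finite F1" "finite F2" using finite_subset[OF assms(4) assms(1)] finite_subset[OF assms(5) assms(2)] by auto
  have c1: "card (W1 \<union> W2) = card W1 + card W2" using card_Un_disjoint[OF assms(1,2,3)] .
  have d: "F1 \<inter> F2 = {}" using assms(3,4,5) by blast
  have c2: "card (F1 \<union> F2) = card F1 + card F2" using card_Un_disjoint[OF f d] .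
  have l1: "card F1 \<le> card W1" "card F2 \<le> card W2" using card_mono[OF assms(1) assms(4)] card_mono[OF assms(2) assms(5)] by auto
  have "card W1 + card W2 - (card F1 + card F2) = (card W1 - card F1) + (card W2 - card F2)"
    using l1 by simp
  then show ?thesis unfolding wt_def c1 c2 by (simp add: power_add)
qed

lemma sum_split:
  assumes "finite W1" "finite W2" "W1 \<inter> W2 = {}"
  shows "(\<Sum>F\<in>Pow (W1 \<union> W2). \<phi> F) = (\<Sum>F1\<in>Pow W1. \<Sum>F2\<in>Pow W2. \<phi> (F1 \<union> F2))"
proof -
  have "(\<Sum>F1\<in>Pow W1. \<Sum>F2\<in>Pow W2. \<phi> (F1 \<union> F2)) = (\<Sum>(F1,F2)\<in>Pow W1 \<times> Pow W2. \<phi> (F1 \<union> F2))"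
    by (simp add: sum.cartesian_product)
  also have "\<dots> = (\<Sum>F\<in>Pow (W1 \<union> W2). \<phi> F)"
    by (rule sum.reindex_bij_witness[where i="\<lambda>F. (F \<inter> W1, F \<inter> W2)" and j="\<lambda>(F1,F2). F1 \<union> F2"])
       (use assms in auto)
  finally show ?thesis by simp
qed

lemma wt_sum_one:
  assumes "finite W" shows "(\<Sum>F\<in>Pow W. wt p W F) = 1"
  using assms
proof (induction W rule: finite_induct)
  case empty
  then show ?case by (simp add: wt_def)
next
  case (insert x W)
  have iw: "insert x W = {x} \<union> W" by auto
  have "(\<Sum>F\<in>Pow (insert x W). wt p (insert x W) F)
      = (\<Sum>F1\<in>Pow {x}. \<Sum>F2\<in>Pow W. wt p ({x} \<union> W) (F1 \<union> F2))"
    unfolding iw by (rule sum_split) (use insert.hyps in auto)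
  also have "\<dots> = (\<Sum>F1\<in>Pow {x}. \<Sum>F2\<in>Pow W. wt p {x} F1 * wt p W F2)"
    by (intro sum.cong refl wt_split) (use insert.hyps in auto)
  also have "\<dots> = (\<Sum>F1\<in>Pow {x}. wt p {x} F1) * (\<Sum>F2\<in>Pow W. wt p W F2)"
    by (simp add: sum_product)
  also have "(\<Sum>F1\<in>Pow {x}. wt p {x} F1) = 1"
  proof -
    have "Pow {x} = {{}, {x}}" by (auto simp: subset_singleton_iff)
    then show ?thesis by (simp add: wt_def)
  qed
  finally show ?case using insert by simp
qed

lemma restrict_sum:
  assumes "finite U" "W \<subseteq> U" "\<And>E. Ev E = Ev (E \<inter> W)"
  shows "(\<Sum>E\<in>Pow U. if Ev E then wt p U E else 0) = (\<Sum>F\<in>Pow W. if Ev F then wt p W F else 0)"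
proof -
  have fw: "finite W" "finite (U - W)" using finite_subset[OF assms(2) assms(1)] assms(1) by auto
  have u: "W \<union> (U - W) = U" using assms by auto
  have "(\<Sum>E\<in>Pow U. if Ev E then wt p U E else 0)
     = (\<Sum>F\<in>Pow W. \<Sum>G\<in>Pow (U - W). if Ev (F \<union> G) then wt p (W \<union> (U - W)) (F \<union> G) else 0)"
    using sum_split[OF fw(1) fw(2), of "\<lambda>E. if Ev E then wt p U E else 0"] unfolding u by simp
  also have "\<dots> = (\<Sum>F\<in>Pow W. \<Sum>G\<in>Pow (U - W). (if Ev F then wt p W F else 0) * wt p (U - W) G)"
  proof (intro sum.cong refl)
    fix F G assume F: "F \<in> Pow W" and G: "G \<in> Pow (U - W)"
    have "(F \<union> G) \<inter> W = F" using F G by auto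
    then have "Ev (F \<union> G) = Ev F" using assms(3)[of "F \<union> G"] by simp
    then show "(if Ev (F \<union> G) then wt p (W \<union> (U - W)) (F \<union> G) else 0) = (if Ev F then wt p W F else 0) * wt p (U - W) G"
      using wt_split[of W "U - W" F G p] fw F G by auto
  qed
  also have "\<dots> = (\<Sum>F\<in>Pow W. if Ev F then wt p W F else 0)"
    by (simp add: sum_distrib_left[symmetric] wt_sum_one fw)
  finally show ?thesis .
qed

lemma gnp_eq: "gnp_prob n p Ev = (\<Sum>E\<in>Pow (all_edges n). if Ev E then wt p (all_edges n) E else 0)"
proof -
  have fin: "finite (all_edges n)"
    by (rule finite_subset[of _ "Pow {..<n}"]) (auto simp: all_edges_def)
  have eq: "{E. E \<subseteq> all_edges n \<and> Ev E} = {E\<in>Pow (all_edges n). Ev E}" by auto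
  have "gnp_prob n p Ev = sum (wt p (all_edges n)) {E\<in>Pow (all_edges n). Ev E}"
    unfolding gnp_prob_def wt_def by (rule sum.cong) auto
  also have "\<dots> = (\<Sum>E\<in>Pow (all_edges n). if Ev E then wt p (all_edges n) E else 0)"
    by (rule sum.inter_filter) (use fin in simp)
  finally show ?thesis .
qed



lemma ball_img: "(\<forall>x\<in>f ` A. Q x) = (\<forall>x\<in>A. Q (f x))" by auto

lemma all_edges_EK: "all_edges n = EK {..<n}"
  by (auto simp: all_edges_def EK_def card_2_iff)

lemma finite_EK: "finite K \<Longrightarrow> finite (EK K)"
  by (rule finite_subset[of _ "Pow K"]) (auto simp: EK_def)

lemma EK_mono: "K \<subseteq> L \<Longrightarrow> EK K \<subseteq> EK L"
  by (auto simp: EK_def)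

lemma EK_Int: "EK K \<inter> EK L = EK (K \<inter> L)"
  by (auto simp: EK_def)

lemma card_EK: "finite K \<Longrightarrow> card (EK K) = card K choose 2"
  unfolding EK_def by (rule n_subsets)

lemma edge_EK: "x \<in> K \<Longrightarrow> y \<in> K \<Longrightarrow> x \<noteq> y \<Longrightarrow> {x, y} \<in> EK K"
  by (auto simp: EK_def)

lemma nbhd_sub: "nbhd E K S \<subseteq> K" by (auto simp: nbhd_def)

lemma nbhd_cong:
  assumes "S \<subseteq> K" "\<And>x y. x \<in> K \<Longrightarrow> y \<in> K \<Longrightarrow> x \<noteq> y \<Longrightarrow> ({x, y} \<in> E \<longleftrightarrow> {x, y} \<in> E')"
  shows "nbhd E K S = nbhd E' K S"
proof -
  have "\<And>u v. u \<in> K \<Longrightarrow> v \<in> S \<Longrightarrow> u \<noteq> v \<Longrightarrow> ({u, v} \<in> E \<longleftrightarrow> {u, v} \<in> E')"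
    using assms by blast
  then show ?thesis unfolding nbhd_def by blast
qed

lemma in_F_cong1:
  assumes H: "\<And>x y. x \<in> K \<Longrightarrow> y \<in> K \<Longrightarrow> x \<noteq> y \<Longrightarrow> ({x, y} \<in> E \<longleftrightarrow> {x, y} \<in> E')"
    and M: "in_F a k E K"
  shows "in_F a k E' K"
  using M unfolding in_F_def
  apply (elim exE conjE)
  subgoal for A P
    apply (rule exI[of _ A], rule exI[of _ P])
  proof -
    assume c: "A \<subseteq> K" "real (card A) = a * real k"
        "real (card (K - A)) = (1 - a) * real k"
        "real (card P) = a * real k / 2"
        "\<forall>S\<in>P. S \<subseteq> A \<and> card S = 2" "\<Union>P = A"
        "\<forall>S\<in>P. \<forall>T\<in>P. S \<noteq> T \<longrightarrow> S \<inter> T = {}"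
        "\<forall>x\<in>K. \<forall>y\<in>K. {x, y} \<in> E \<and> x \<noteq> y \<longrightarrow> x \<in> A \<and> y \<in> K - A \<or> x \<in> K - A \<and> y \<in> A"
        "\<forall>S\<in>P. \<forall>\<beta>\<in>K - A. (\<forall>x\<in>S. {x, \<beta>} \<in> E) \<or> (\<forall>x\<in>S. {x, \<beta>} \<notin> E)"
        "\<forall>v\<in>A. 0.15 * real k \<le> real (card (nbhd E K {v}))"
        "\<forall>S\<in>P. \<forall>T\<in>P. S \<noteq> T \<longrightarrow> 0.25 * real k \<le> real (card (nbhd E K S - nbhd E K T \<union> (nbhd E K T - nbhd E K S)))"
    have nb: "\<And>S. S \<subseteq> K \<Longrightarrow> nbhd E K S = nbhd E' K S" using nbhd_cong[OF _ H] by metis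
    have nbP: "\<forall>S\<in>P. nbhd E K S = nbhd E' K S"
    proof
      fix S assume "S \<in> P" then have "S \<subseteq> K" using c(1,5) by blast
      then show "nbhd E K S = nbhd E' K S" by (rule nb)
    qed
    have nbA: "\<forall>v\<in>A. nbhd E K {v} = nbhd E' K {v}"
    proof
      fix v assume "v \<in> A" then have "{v} \<subseteq> K" using c(1) by blast
      then show "nbhd E K {v} = nbhd E' K {v}" by (rule nb)
    qed
    have e1: "\<forall>x\<in>K. \<forall>y\<in>K. {x, y} \<in> E' \<and> x \<noteq> y \<longrightarrow> x \<in> A \<and> y \<in> K - A \<or> x \<in> K - A \<and> y \<in> A"
    proof (intro ballI impI)
      fix x y assume xy: "x \<in> K" "y \<in> K" "{x, y} \<in> E' \<and> x \<noteq> y"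
      then have "{x, y} \<in> E \<and> x \<noteq> y" using H[of x y] by simp
      then show "x \<in> A \<and> y \<in> K - A \<or> x \<in> K - A \<and> y \<in> A" using c(8) xy(1,2) by simp
    qed
    have e2: "\<forall>S\<in>P. \<forall>\<beta>\<in>K - A. (\<forall>x\<in>S. {x, \<beta>} \<in> E') \<or> (\<forall>x\<in>S. {x, \<beta>} \<notin> E')"
    proof (intro ballI)
      fix S \<beta> assume S: "S \<in> P" and b: "\<beta> \<in> K - A"
      have "\<forall>x\<in>S. ({x, \<beta>} \<in> E) = ({x, \<beta>} \<in> E')"
      proof
        fix x assume "x \<in> S"
        then have "x \<in> A" "x \<in> K" using S c(1,5) by auto
        then show "({x, \<beta>} \<in> E) = ({x, \<beta>} \<in> E')" using H[of x \<beta>] b by auto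
      qed
      moreover have "(\<forall>x\<in>S. {x, \<beta>} \<in> E) \<or> (\<forall>x\<in>S. {x, \<beta>} \<notin> E)" using c(9) S b by blast
      ultimately show "(\<forall>x\<in>S. {x, \<beta>} \<in> E') \<or> (\<forall>x\<in>S. {x, \<beta>} \<notin> E')" by blast
    qed
    show "A \<subseteq> K \<and> real (card A) = a * real k \<and>
        real (card (K - A)) = (1 - a) * real k \<and>
        real (card P) = a * real k / 2 \<and>
        (\<forall>S\<in>P. S \<subseteq> A \<and> card S = 2) \<and> \<Union>P = A \<and>
        (\<forall>S\<in>P. \<forall>T\<in>P. S \<noteq> T \<longrightarrow> S \<inter> T = {}) \<and>
        (\<forall>x\<in>K. \<forall>y\<in>K. {x, y} \<in> E' \<and> x \<noteq> y \<longrightarrow> x \<in> A \<and> y \<in> K - A \<or> x \<in> K - A \<and> y \<in> A) \<and>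
        (\<forall>S\<in>P. \<forall>\<beta>\<in>K - A. (\<forall>x\<in>S. {x, \<beta>} \<in> E') \<or> (\<forall>x\<in>S. {x, \<beta>} \<notin> E')) \<and>
        (\<forall>v\<in>A. 0.15 * real k \<le> real (card (nbhd E' K {v}))) \<and>
        (\<forall>S\<in>P. \<forall>T\<in>P. S \<noteq> T \<longrightarrow> 0.25 * real k \<le> real (card (nbhd E' K S - nbhd E' K T \<union> (nbhd E' K T - nbhd E' K S))))"
    proof -
      have c10: "\<forall>v\<in>A. 0.15 * real k \<le> real (card (nbhd E' K {v}))" using c(10) nbA by simp
      have c11: "\<forall>S\<in>P. \<forall>T\<in>P. S \<noteq> T \<longrightarrow> 0.25 * real k \<le> real (card (nbhd E' K S - nbhd E' K T \<union> (nbhd E' K T - nbhd E' K S)))"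
        using c(11) nbP by simp
      show ?thesis using c(1-7) e1 e2 c10 c11 by (intro conjI) assumption+
    qed
  qed
  done

lemma in_F_restrict:
  shows "in_F a k E K = in_F a k (E \<inter> EK K) K"
proof -
  have H: "\<And>x y. x \<in> K \<Longrightarrow> y \<in> K \<Longrightarrow> x \<noteq> y \<Longrightarrow> ({x, y} \<in> E \<longleftrightarrow> {x, y} \<in> E \<inter> EK K)"
    using edge_EK by blast
  have H2: "\<And>x y. x \<in> K \<Longrightarrow> y \<in> K \<Longrightarrow> x \<noteq> y \<Longrightarrow> ({x, y} \<in> E \<inter> EK K \<longleftrightarrow> {x, y} \<in> E)"
    using H by blast
  show ?thesis using in_F_cong1[OF H] in_F_cong1[OF H2] by blast
qed



lemma in_F_bij:
  assumes h: "bij_betw h K K'" and F: "F \<subseteq> Pow K" and M: "in_F a k F K"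
  shows "in_F a k ((`) h ` F) K'"
proof -
  have inj: "inj_on h K" and K': "K' = h ` K" using h by (auto simp: bij_betw_def)
  have injP: "inj_on ((`) h) (Pow K)" using inj_on_image_Pow[OF inj] .
  let ?F = "(`) h ` F"
  have edge: "\<And>x y. x \<in> K \<Longrightarrow> y \<in> K \<Longrightarrow> ({h x, h y} \<in> ?F \<longleftrightarrow> {x, y} \<in> F)"
  proof -
    fix x y assume xy: "x \<in> K" "y \<in> K"
    have "h ` {x, y} \<in> ?F \<longleftrightarrow> {x, y} \<in> F"
      by (rule inj_on_image_mem_iff[OF injP _ F]) (use xy in simp)
    then show "({h x, h y} \<in> ?F \<longleftrightarrow> {x, y} \<in> F)" by simp
  qed
  have hneq: "\<And>x y. x \<in> K \<Longrightarrow> y \<in> K \<Longrightarrow> (h x = h y \<longleftrightarrow> x = y)"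
    using inj by (meson inj_on_eq_iff)
  have hmem: "\<And>x B. x \<in> K \<Longrightarrow> B \<subseteq> K \<Longrightarrow> (h x \<in> h ` B \<longleftrightarrow> x \<in> B)"
    using inj_on_image_mem_iff[OF inj] by blast
  have nbh: "nbhd ?F K' (h ` S) = h ` nbhd F K S" if S: "S \<subseteq> K" for S
  proof
    show "nbhd ?F K' (h ` S) \<subseteq> h ` nbhd F K S"
    proof
      fix w assume "w \<in> nbhd ?F K' (h ` S)"
      then obtain u v where u: "u \<in> K" "w = h u" and v: "v \<in> S" and e: "{h u, h v} \<in> ?F" "h u \<noteq> h v"
        unfolding nbhd_def K' by blast
      have "v \<in> K" using v S by blast
      then have "{u, v} \<in> F" "u \<noteq> v" using edge[OF u(1)] e by auto
      then have "u \<in> nbhd F K S" using u v unfolding nbhd_def by blast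
      then show "w \<in> h ` nbhd F K S" using u by blast
    qed
    show "h ` nbhd F K S \<subseteq> nbhd ?F K' (h ` S)"
    proof
      fix w assume "w \<in> h ` nbhd F K S"
      then obtain u v where u: "u \<in> K" "w = h u" and v: "v \<in> S" and e: "{u, v} \<in> F" "u \<noteq> v"
        unfolding nbhd_def by blast
      have vK: "v \<in> K" using v S by blast
      then have "{h u, h v} \<in> ?F" "h u \<noteq> h v" using edge[OF u(1) vK] hneq[OF u(1) vK] e by auto
      then show "w \<in> nbhd ?F K' (h ` S)" using u v unfolding nbhd_def K' by blast
    qed
  qed
  have sd: "h ` X - h ` Y = h ` (X - Y)" if "X \<subseteq> K" "Y \<subseteq> K" for X Y
    by (rule inj_on_image_set_diff[OF inj, symmetric]) (use that in auto)
  have cardK: "\<And>B. B \<subseteq> K \<Longrightarrow> card (h ` B) = card B"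
    using inj by (meson card_image inj_on_subset)
  show ?thesis
    using M unfolding in_F_def
    apply (elim exE conjE)
    subgoal for A P
      apply (rule exI[of _ "h ` A"], rule exI[of _ "(`) h ` P"])
    proof -
      assume c: "A \<subseteq> K" "real (card A) = a * real k"
        "real (card (K - A)) = (1 - a) * real k"
        "real (card P) = a * real k / 2"
        "\<forall>S\<in>P. S \<subseteq> A \<and> card S = 2" "\<Union>P = A"
        "\<forall>S\<in>P. \<forall>T\<in>P. S \<noteq> T \<longrightarrow> S \<inter> T = {}"
        "\<forall>x\<in>K. \<forall>y\<in>K. {x, y} \<in> F \<and> x \<noteq> y \<longrightarrow> x \<in> A \<and> y \<in> K - A \<or> x \<in> K - A \<and> y \<in> A"
        "\<forall>S\<in>P. \<forall>\<beta>\<in>K - A. (\<forall>x\<in>S. {x, \<beta>} \<in> F) \<or> (\<forall>x\<in>S. {x, \<beta>} \<notin> F)"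
        "\<forall>v\<in>A. 0.15 * real k \<le> real (card (nbhd F K {v}))"
        "\<forall>S\<in>P. \<forall>T\<in>P. S \<noteq> T \<longrightarrow> 0.25 * real k \<le> real (card (nbhd F K S - nbhd F K T \<union> (nbhd F K T - nbhd F K S)))"
      have SK: "\<And>S. S \<in> P \<Longrightarrow> S \<subseteq> K" using c(1,5) by blast
      have PK: "P \<subseteq> Pow K" using SK by blast
      have KA: "K' - h ` A = h ` (K - A)" unfolding K' using inj_on_image_set_diff[OF inj _ c(1)] by blast
      have d1: "h ` A \<subseteq> K'" using c(1) K' by blast
      have d2: "real (card (h ` A)) = a * real k" using cardK[OF c(1)] c(2) by simp
      have d3: "real (card (K' - h ` A)) = (1 - a) * real k" unfolding KA using cardK[of "K - A"] c(3) by simp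
      have d4: "real (card ((`) h ` P)) = a * real k / 2"
        using card_image[OF inj_on_subset[OF injP PK]] c(4) by simp
      have d5: "\<forall>S\<in>(`) h ` P. S \<subseteq> h ` A \<and> card S = 2"
        using c(5) cardK SK by auto
      have d6: "\<Union>((`) h ` P) = h ` A" using c(6) image_Union[of h P] by metis
      have d7: "\<forall>S\<in>(`) h ` P. \<forall>T\<in>(`) h ` P. S \<noteq> T \<longrightarrow> S \<inter> T = {}"
      proof (intro ballI impI)
        fix S' T' assume "S' \<in> (`) h ` P" "T' \<in> (`) h ` P" "S' \<noteq> T'"
        then obtain S T where ST: "S \<in> P" "T \<in> P" "S' = h ` S" "T' = h ` T" "S \<noteq> T" by blast
        then have "S \<inter> T = {}" using c(7) by blast
        then show "S' \<inter> T' = {}" using inj_on_image_Int[OF inj SK[OF ST(1)] SK[OF ST(2)]] ST by simp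
      qed
      have d8: "\<forall>x\<in>K'. \<forall>y\<in>K'. {x, y} \<in> ?F \<and> x \<noteq> y \<longrightarrow> x \<in> h ` A \<and> y \<in> K' - h ` A \<or> x \<in> K' - h ` A \<and> y \<in> h ` A"
        unfolding KA
      proof (unfold K', intro ballI impI)
        fix x' y' assume x': "x' \<in> h ` K" and y': "y' \<in> h ` K" and e: "{x', y'} \<in> ?F \<and> x' \<noteq> y'"
        then obtain x y where xy: "x \<in> K" "y \<in> K" "x' = h x" "y' = h y" by blast
        have "{x, y} \<in> F \<and> x \<noteq> y" using e edge[OF xy(1,2)] xy by auto
        then have "x \<in> A \<and> y \<in> K - A \<or> x \<in> K - A \<and> y \<in> A" using c(8) xy(1,2) by blast
        then show "x' \<in> h ` A \<and> y' \<in> h ` (K - A) \<or> x' \<in> h ` (K - A) \<and> y' \<in> h ` A"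
          using xy by blast
      qed
      have d9: "\<forall>S\<in>(`) h ` P. \<forall>\<beta>\<in>K' - h ` A. (\<forall>x\<in>S. {x, \<beta>} \<in> ?F) \<or> (\<forall>x\<in>S. {x, \<beta>} \<notin> ?F)"
        unfolding KA
      proof (intro ballI)
        fix S' \<beta>' assume "S' \<in> (`) h ` P" "\<beta>' \<in> h ` (K - A)"
        then obtain S \<beta> where S: "S \<in> P" "S' = h ` S" and b: "\<beta> \<in> K - A" "\<beta>' = h \<beta>" by blast
        have eq: "\<forall>x\<in>S. ({h x, h \<beta>} \<in> ?F) = ({x, \<beta>} \<in> F)" using edge SK[OF S(1)] b(1) by blast
        have "(\<forall>x\<in>S. {x, \<beta>} \<in> F) \<or> (\<forall>x\<in>S. {x, \<beta>} \<notin> F)" using c(9) S(1) b(1) by blast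
        then have "(\<forall>x\<in>S. {h x, h \<beta>} \<in> ?F) \<or> (\<forall>x\<in>S. {h x, h \<beta>} \<notin> ?F)" using eq by blast
        then show "(\<forall>x\<in>S'. {x, \<beta>'} \<in> ?F) \<or> (\<forall>x\<in>S'. {x, \<beta>'} \<notin> ?F)" using S(2) b(2) by simp
      qed
      have d10: "\<forall>v\<in>h ` A. 0.15 * real k \<le> real (card (nbhd ?F K' {v}))"
      proof
        fix v' assume "v' \<in> h ` A"
        then obtain v where v: "v \<in> A" "v' = h v" by blast
        have "{v} \<subseteq> K" using v c(1) by blast
        then have "nbhd ?F K' {v'} = h ` nbhd F K {v}" using nbh[of "{v}"] v by simp
        then have "card (nbhd ?F K' {v'}) = card (nbhd F K {v})" using cardK[OF nbhd_sub] by simp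
        then show "0.15 * real k \<le> real (card (nbhd ?F K' {v'}))" using c(10) v by simp
      qed
      have d11: "\<forall>S\<in>(`) h ` P. \<forall>T\<in>(`) h ` P. S \<noteq> T \<longrightarrow> 0.25 * real k \<le> real (card (nbhd ?F K' S - nbhd ?F K' T \<union> (nbhd ?F K' T - nbhd ?F K' S)))"
      proof (intro ballI impI)
        fix S' T' assume "S' \<in> (`) h ` P" "T' \<in> (`) h ` P" "S' \<noteq> T'"
        then obtain S T where ST: "S \<in> P" "T \<in> P" "S' = h ` S" "T' = h ` T" "S \<noteq> T" by blast
        let ?NS = "nbhd F K S" and ?NT = "nbhd F K T"
        have n1: "nbhd ?F K' S' = h ` ?NS" using nbh[OF SK[OF ST(1)]] ST(3) by simp
        have n2: "nbhd ?F K' T' = h ` ?NT" using nbh[OF SK[OF ST(2)]] ST(4) by simp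
        have "h ` ?NS - h ` ?NT \<union> (h ` ?NT - h ` ?NS) = h ` (?NS - ?NT \<union> (?NT - ?NS))"
          using sd[OF nbhd_sub nbhd_sub, of F S F T] sd[OF nbhd_sub nbhd_sub, of F T F S] by (simp add: image_Un)
        moreover have "card (h ` (?NS - ?NT \<union> (?NT - ?NS))) = card (?NS - ?NT \<union> (?NT - ?NS))"
          using cardK nbhd_sub[of F K S] nbhd_sub[of F K T] by (metis Diff_subset Un_subset_iff subset_trans)
        ultimately show "0.25 * real k \<le> real (card (nbhd ?F K' S' - nbhd ?F K' T' \<union> (nbhd ?F K' T' - nbhd ?F K' S')))"
          using c(11) ST n1 n2 by simp
      qed
      show "h ` A \<subseteq> K' \<and> real (card (h ` A)) = a * real k \<and>
        real (card (K' - h ` A)) = (1 - a) * real k \<and>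
        real (card ((`) h ` P)) = a * real k / 2 \<and>
        (\<forall>S\<in>(`) h ` P. S \<subseteq> h ` A \<and> card S = 2) \<and> \<Union>((`) h ` P) = h ` A \<and>
        (\<forall>S\<in>(`) h ` P. \<forall>T\<in>(`) h ` P. S \<noteq> T \<longrightarrow> S \<inter> T = {}) \<and>
        (\<forall>x\<in>K'. \<forall>y\<in>K'. {x, y} \<in> ?F \<and> x \<noteq> y \<longrightarrow> x \<in> h ` A \<and> y \<in> K' - h ` A \<or> x \<in> K' - h ` A \<and> y \<in> h ` A) \<and>
        (\<forall>S\<in>(`) h ` P. \<forall>\<beta>\<in>K' - h ` A. (\<forall>x\<in>S. {x, \<beta>} \<in> ?F) \<or> (\<forall>x\<in>S. {x, \<beta>} \<notin> ?F)) \<and>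
        (\<forall>v\<in>h ` A. 0.15 * real k \<le> real (card (nbhd ?F K' {v}))) \<and>
        (\<forall>S\<in>(`) h ` P. \<forall>T\<in>(`) h ` P. S \<noteq> T \<longrightarrow> 0.25 * real k \<le> real (card (nbhd ?F K' S - nbhd ?F K' T \<union> (nbhd ?F K' T - nbhd ?F K' S))))"
        using d1 d2 d3 d4 d5 d6 d7 d8 d9 d10 d11 by (intro conjI) assumption+
    qed
    done
qed



lemma wt_nonneg: "0 \<le> p \<Longrightarrow> p \<le> 1 \<Longrightarrow> 0 \<le> wt p W F"
  by (simp add: wt_def)

lemma prob_restrict:
  assumes K: "K \<subseteq> {..<n}"
  shows "gnp_prob n p (\<lambda>E. in_F a k E K) = (\<Sum>F\<in>{F\<in>Pow (EK K). in_F a k F K}. wt p (EK K) F)"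
proof -
  have fin: "finite (all_edges n)" unfolding all_edges_EK by (rule finite_EK) simp
  have sub: "EK K \<subseteq> all_edges n" unfolding all_edges_EK using K by (rule EK_mono)
  have "gnp_prob n p (\<lambda>E. in_F a k E K) = (\<Sum>F\<in>Pow (EK K). if in_F a k F K then wt p (EK K) F else 0)"
    unfolding gnp_eq by (rule restrict_sum[OF fin sub]) (rule in_F_restrict)
  also have "\<dots> = (\<Sum>F\<in>{F\<in>Pow (EK K). in_F a k F K}. wt p (EK K) F)"
    by (rule sum.inter_filter[symmetric]) (use finite_EK finite_subset[OF K] in simp)
  finally show ?thesis .
qed

lemma prob_le:
  assumes K: "K \<subseteq> {..<n}" and K': "K' \<subseteq> {..<n}" and c: "card K = card K'"
    and p: "0 \<le> p" "p \<le> 1"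
  shows "gnp_prob n p (\<lambda>E. in_F a k E K) \<le> gnp_prob n p (\<lambda>E. in_F a k E K')"
proof -
  have fK: "finite K" "finite K'" using K K' finite_subset by blast+
  obtain h where h: "bij_betw h K K'" using finite_same_card_bij[OF fK c] by blast
  have inj: "inj_on h K" and K'h: "K' = h ` K" using h by (auto simp: bij_betw_def)
  have EKP: "EK K \<subseteq> Pow K" by (auto simp: EK_def)
  have inj1: "inj_on ((`) h) (EK K)" using inj_on_subset[OF inj_on_image_Pow[OF inj] EKP] .
  have inj2: "inj_on ((`) ((`) h)) (Pow (EK K))" using inj_on_image_Pow[OF inj1] .
  have cEK: "card (EK K) = card (EK K')" using card_EK fK c by simp
  let ?S = "{F\<in>Pow (EK K). in_F a k F K}" and ?S' = "{F\<in>Pow (EK K'). in_F a k F K'}"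
  have img: "(`) ((`) h) ` ?S \<subseteq> ?S'"
  proof
    fix G assume "G \<in> (`) ((`) h) ` ?S"
    then obtain F where F: "F \<in> ?S" "G = (`) h ` F" by blast
    have "G \<subseteq> EK K'"
    proof
      fix e' assume "e' \<in> G"
      then obtain e where e: "e \<in> F" "e' = h ` e" using F by blast
      then have eK: "e \<subseteq> K" "card e = 2" using F(1) by (auto simp: EK_def)
      then have "card (h ` e) = 2" using inj by (metis card_image inj_on_subset)
      then show "e' \<in> EK K'" using eK e K'h by (auto simp: EK_def)
    qed
    moreover have "in_F a k G K'" using in_F_bij[OF h _, of F a k] F EKP by auto
    ultimately show "G \<in> ?S'" by simp
  qed
  have "gnp_prob n p (\<lambda>E. in_F a k E K) = (\<Sum>F\<in>?S. wt p (EK K) F)" by (rule prob_restrict[OF K])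
  also have "\<dots> = (\<Sum>F\<in>?S. wt p (EK K') ((`) h ` F))"
  proof (rule sum.cong[OF refl])
    fix F assume "F \<in> ?S"
    then have "card ((`) h ` F) = card F" using inj1 by (metis (no_types, lifting) PowD card_image inj_on_subset mem_Collect_eq)
    then show "wt p (EK K) F = wt p (EK K') ((`) h ` F)" by (simp add: wt_def cEK)
  qed
  also have "\<dots> = (\<Sum>G\<in>(`) ((`) h) ` ?S. wt p (EK K') G)"
  proof -
    have "inj_on ((`) ((`) h)) ?S" by (rule inj_on_subset[OF inj2]) blast
    then show ?thesis by (simp add: sum.reindex)
  qed
  also have "\<dots> \<le> (\<Sum>G\<in>?S'. wt p (EK K') G)"
    by (rule sum_mono2) (use img wt_nonneg p finite_EK fK in auto)
  also have "\<dots> = gnp_prob n p (\<lambda>E. in_F a k E K')" by (rule prob_restrict[OF K', symmetric])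
  finally show ?thesis .
qed

lemma prob_eq:
  assumes K: "K \<subseteq> {..<n}" and K': "K' \<subseteq> {..<n}" and c: "card K = card K'"
    and p: "0 \<le> p" "p \<le> 1"
  shows "gnp_prob n p (\<lambda>E. in_F a k E K) = gnp_prob n p (\<lambda>E. in_F a k E K')"
  by (rule antisym[OF prob_le[OF K K' c p] prob_le[OF K' K c[symmetric] p]])



lemma triple:
  fixes c :: real
  shows "(\<Sum>x\<in>A. \<Sum>z\<in>B. c * (f x * g z)) = c * sum f A * sum g B"
proof -
  have "sum f A * sum g B = (\<Sum>x\<in>A. \<Sum>z\<in>B. f x * g z)" by (rule sum_product)
  then have "c * (sum f A * sum g B) = (\<Sum>x\<in>A. \<Sum>z\<in>B. c * (f x * g z))" by (simp add: sum_distrib_left)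
  then show ?thesis by (simp add: mult.assoc)
qed

lemma joint:
  assumes fU: "finite U" and sub: "X \<subseteq> U" "Y \<subseteq> U" "Z \<subseteq> U"
    and dj: "X \<inter> Y = {}" "Y \<inter> Z = {}" "X \<inter> Z = {}"
    and M1: "\<And>E. M1 E = M1 (E \<inter> (X \<union> Y))" and M2: "\<And>E. M2 E = M2 (E \<inter> (Y \<union> Z))"
  shows "(\<Sum>E\<in>Pow U. if M1 E \<and> M2 E then wt p U E else 0) =
     (\<Sum>y\<in>Pow Y. wt p Y y * (\<Sum>x\<in>Pow X. if M1 (y \<union> x) then wt p X x else 0)
         * (\<Sum>z\<in>Pow Z. if M2 (y \<union> z) then wt p Z z else 0))"
proof -
  have fin: "finite X" "finite Y" "finite Z"
    using finite_subset[OF sub(1) fU] finite_subset[OF sub(2) fU] finite_subset[OF sub(3) fU] by auto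
  define W where "W = Y \<union> (X \<union> Z)"
  have WU: "W \<subseteq> U" using sub unfolding W_def by blast
  have ev: "(M1 E \<and> M2 E) = (M1 (E \<inter> W) \<and> M2 (E \<inter> W))" for E
  proof -
    have "E \<inter> W \<inter> (X \<union> Y) = E \<inter> (X \<union> Y)" "E \<inter> W \<inter> (Y \<union> Z) = E \<inter> (Y \<union> Z)"
      unfolding W_def by blast+
    then show ?thesis using M1[of E] M1[of "E \<inter> W"] M2[of E] M2[of "E \<inter> W"] by simp
  qed
  have "(\<Sum>E\<in>Pow U. if M1 E \<and> M2 E then wt p U E else 0) =
        (\<Sum>F\<in>Pow W. if M1 F \<and> M2 F then wt p W F else 0)"
    by (rule restrict_sum[OF fU WU]) (rule ev)
  also have "\<dots> = (\<Sum>y\<in>Pow Y. \<Sum>G\<in>Pow (X \<union> Z). if M1 (y \<union> G) \<and> M2 (y \<union> G) then wt p W (y \<union> G) else 0)"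
    unfolding W_def by (rule sum_split) (use fin dj in auto)
  also have "\<dots> = (\<Sum>y\<in>Pow Y. \<Sum>x\<in>Pow X. \<Sum>z\<in>Pow Z. if M1 (y \<union> (x \<union> z)) \<and> M2 (y \<union> (x \<union> z)) then wt p W (y \<union> (x \<union> z)) else 0)"
    by (intro sum.cong refl sum_split) (use fin dj in auto)
  also have "\<dots> = (\<Sum>y\<in>Pow Y. \<Sum>x\<in>Pow X. \<Sum>z\<in>Pow Z. wt p Y y * ((if M1 (y \<union> x) then wt p X x else 0) * (if M2 (y \<union> z) then wt p Z z else 0)))"
  proof (intro sum.cong refl)
    fix y x z assume y: "y \<in> Pow Y" and x: "x \<in> Pow X" and z: "z \<in> Pow Z"
    have w: "wt p W (y \<union> (x \<union> z)) = wt p Y y * (wt p X x * wt p Z z)"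
    proof -
      have "wt p W (y \<union> (x \<union> z)) = wt p Y y * wt p (X \<union> Z) (x \<union> z)"
        unfolding W_def by (rule wt_split) (use fin dj x y z in auto)
      also have "wt p (X \<union> Z) (x \<union> z) = wt p X x * wt p Z z"
        by (rule wt_split) (use fin dj x y z in auto)
      finally show ?thesis .
    qed
    have a1: "(y \<union> (x \<union> z)) \<inter> (X \<union> Y) = (y \<union> x) \<inter> (X \<union> Y)" using x y z dj by blast
    have a2: "(y \<union> (x \<union> z)) \<inter> (Y \<union> Z) = (y \<union> z) \<inter> (Y \<union> Z)" using x y z dj by blast
    have "M1 (y \<union> (x \<union> z)) = M1 (y \<union> x)" using M1[of "y \<union> (x \<union> z)"] M1[of "y \<union> x"] a1 by simp
    moreover have "M2 (y \<union> (x \<union> z)) = M2 (y \<union> z)" using M2[of "y \<union> (x \<union> z)"] M2[of "y \<union> z"] a2 by simp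
    ultimately show "(if M1 (y \<union> (x \<union> z)) \<and> M2 (y \<union> (x \<union> z)) then wt p W (y \<union> (x \<union> z)) else 0) =
      wt p Y y * ((if M1 (y \<union> x) then wt p X x else 0) * (if M2 (y \<union> z) then wt p Z z else 0))"
      using w by simp
  qed
  also have "\<dots> = (\<Sum>y\<in>Pow Y. wt p Y y * (\<Sum>x\<in>Pow X. if M1 (y \<union> x) then wt p X x else 0)
         * (\<Sum>z\<in>Pow Z. if M2 (y \<union> z) then wt p Z z else 0))"
    by (rule sum.cong[OF refl], rule triple)
  finally show ?thesis .
qed

lemma p_bound:
  fixes p p0 :: real
  assumes "4 * p0 ^ 3 - 7 * p0 ^ 2 + 5 * p0 - 1 = 0" "p0 < p" "p < 1/2"
  shows "3/10 < p" "(1 - p) ^ 4 \<le> p"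
proof -
  define Q where "Q = 4 * p0^2 - 29/5 * p0 + 163/50"
  have Q: "Q > 0"
  proof -
    have "Q = 4 * (p0 - 29/40)^2 + 463/400" unfolding Q_def power2_eq_square by (simp add: field_simps)
    moreover have "(p0 - 29/40)^2 \<ge> 0" by simp
    ultimately show ?thesis by linarith
  qed
  have "(p0 - 3/10) * Q = (4 * p0 ^ 3 - 7 * p0 ^ 2 + 5 * p0 - 1) + 11/500"
    unfolding Q_def power2_eq_square power3_eq_cube by (simp add: field_simps)
  then have eq: "(p0 - 0.3) * Q = 0.022" using assms(1) by simp
  have "p0 > 0.3"
  proof (rule ccontr)
    assume "\<not> p0 > 0.3"
    then have "(p0 - 0.3) * Q \<le> 0" using Q by (simp add: mult_nonpos_nonneg)
    then show False using eq by simp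
  qed
  then show p3: "3/10 < p" using assms(2) by simp
  have "(1 - p) ^ 4 \<le> (7/10) ^ 4"
    by (rule power_mono) (use p3 assms(3) in auto)
  also have "\<dots> = 2401 / 10000" by (simp add: power_numeral_reduce)
  also have "\<dots> \<le> p" using p3 by simp
  finally show "(1 - p) ^ 4 \<le> p" .
qed

lemma numeric:
  fixes p a :: real and e N i k :: nat
  assumes p: "0 < p" "p < 1" "(1 - p) ^ 4 \<le> p" and eN: "e \<le> N" and ea: "real e \<le> a * k * i"
    and Ni: "2 * real N \<le> real i * real i" and ik: "real i \<le> (1 - 10 * a) * k"
  shows "(1 - p) powr ((0.5 - 2 * a) * k * i) \<le> p ^ e * (1 - p) ^ (N - e)"
proof -
  define q where "q = 1 - p"
  define L where "L = ln q"
  define c where "c = (0.5 - 2 * a) * k * i"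
  have q: "0 < q" "q < 1" using p unfolding q_def by auto
  have L: "L < 0" unfolding L_def using q by simp
  have lp: "ln p \<ge> 4 * L"
  proof -
    have "ln (q ^ 4) \<le> ln p" using p q unfolding q_def by (subst ln_le_cancel_iff) auto
    then show ?thesis unfolding L_def using q by (simp add: ln_realpow)
  qed
  have pos: "p ^ e * q ^ (N - e) > 0" using p q by simp
  have lnR: "ln (p ^ e * q ^ (N - e)) = e * ln p + real (N - e) * L"
    unfolding L_def using p q by (simp add: ln_mult ln_realpow)
  have rNe: "real (N - e) = real N - real e" using eN by simp
  have b1: "real e * ln p \<ge> real e * (4 * L)" by (rule mult_left_mono[OF lp]) simp
  have ii: "real i * real i \<le> (1 - 10 * a) * k * i" by (rule mult_right_mono[OF ik]) simp
  have Nc: "real N + 3 * real e \<le> c" unfolding c_def using Ni ii ea by (simp add: algebra_simps)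
  have b2: "(real N + 3 * real e) * L \<ge> c * L" by (rule mult_right_mono_neg[OF Nc]) (use L in simp)
  have key: "c * L \<le> ln (p ^ e * q ^ (N - e))"
    unfolding lnR rNe using b1 b2 by (simp add: algebra_simps)
  have "q powr c = exp (c * L)" unfolding L_def powr_def using q by (simp add: mult.commute)
  also have "\<dots> \<le> exp (ln (p ^ e * q ^ (N - e)))" using key by simp
  also have "\<dots> = p ^ e * q ^ (N - e)" using pos by simp
  finally show ?thesis unfolding q_def c_def .
qed



theorem mainTheorem13:
  fixes p p0 a :: real and k n :: nat and K K' :: "nat set"
  assumes p0_root: "4 * p0 ^ 3 - 7 * p0 ^ 2 + 5 * p0 - 1 = 0"
    and p_range: "p0 < p" "p < 1 / 2"
    and a_range: "0 < a" "a < 0.01"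
    and ak_even: "\<exists>m :: int. a * real k = 2 * real_of_int m"
    and K: "K \<subseteq> {..<n}" "card K = k"
    and K': "K' \<subseteq> {..<n}" "card K' = k"
    and i_bound: "real (card (K \<inter> K')) \<le> (1 - 10 * a) * real k"
  shows "gnp_prob n p (\<lambda>E. in_F a k E K \<and> in_F a k E K')
           \<le> (1 - p) powr (- (0.5 - 2 * a) * real k * real (card (K \<inter> K')))
              * (gnp_prob n p (\<lambda>E. in_F a k E K)) ^ 2"
proof -
  have p3: "3/10 < p" and p4: "(1 - p) ^ 4 \<le> p" using p_bound[OF p0_root p_range] by auto
  have p01: "0 < p" "p < 1" "0 \<le> p" "p \<le> 1" using p3 p_range(2) by auto
  define I where "I = K \<inter> K'"
  define i where "i = card I"
  define U where "U = all_edges n"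
  define Y where "Y = EK I"
  define X where "X = EK K - Y"
  define Z where "Z = EK K' - Y"
  have fK: "finite K" "finite K'" using K(1) K'(1) finite_subset by blast+
  have fI: "finite I" unfolding I_def using fK by simp
  have fU: "finite U" unfolding U_def all_edges_EK by (rule finite_EK) simp
  have YK: "Y \<subseteq> EK K" "Y \<subseteq> EK K'" unfolding Y_def I_def using EK_mono[of "K \<inter> K'" K] EK_mono[of "K \<inter> K'" K'] by auto
  have XY: "X \<union> Y = EK K" using YK unfolding X_def by blast
  have YZ: "Y \<union> Z = EK K'" using YK unfolding Z_def by blast
  have EKU: "EK K \<subseteq> U" "EK K' \<subseteq> U" unfolding U_def all_edges_EK using EK_mono[OF K(1)] EK_mono[OF K'(1)] by auto
  have sub: "X \<subseteq> U" "Y \<subseteq> U" "Z \<subseteq> U" using EKU XY YZ by blast+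
  have YI: "Y = EK K \<inter> EK K'" unfolding Y_def I_def by (simp add: EK_Int)
  have dj: "X \<inter> Y = {}" "Y \<inter> Z = {}" "X \<inter> Z = {}" unfolding X_def Z_def using YI by blast+
  have fY: "finite Y" using finite_subset[OF sub(2) fU] .
  define M1 where "M1 = (\<lambda>E. in_F a k E K)"
  define M2 where "M2 = (\<lambda>E. in_F a k E K')"
  have M1r: "\<And>E. M1 E = M1 (E \<inter> (X \<union> Y))" unfolding M1_def XY by (rule in_F_restrict)
  have M2r: "\<And>E. M2 E = M2 (E \<inter> (Y \<union> Z))" unfolding M2_def YZ by (rule in_F_restrict)
  have Tr: "\<And>E. (\<lambda>_. True) E = (\<lambda>_. True) (E \<inter> W)" for W :: "nat set set" by simp
  define f where "f y = (\<Sum>x\<in>Pow X. if M1 (y \<union> x) then wt p X x else 0)" for y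
  define g where "g y = (\<Sum>z\<in>Pow Z. if M2 (y \<union> z) then wt p Z z else 0)" for y
  have fX: "finite X" "finite Z" using finite_subset[OF sub(1) fU] finite_subset[OF sub(3) fU] by auto
  have PP: "gnp_prob n p (\<lambda>E. M1 E \<and> M2 E) = (\<Sum>y\<in>Pow Y. wt p Y y * f y * g y)"
    unfolding gnp_eq f_def g_def U_def[symmetric] by (rule joint[of U X Y Z M1 M2 p, OF fU sub dj M1r M2r])
  have P1: "gnp_prob n p M1 = (\<Sum>y\<in>Pow Y. wt p Y y * f y)"
  proof -
    have "gnp_prob n p M1 = (\<Sum>E\<in>Pow U. if M1 E \<and> True then wt p U E else 0)"
      unfolding gnp_eq U_def by simp
    also have "\<dots> = (\<Sum>y\<in>Pow Y. wt p Y y * f y * (\<Sum>z\<in>Pow Z. if True then wt p Z z else 0))"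
      unfolding f_def by (rule joint[of U X Y Z M1 "\<lambda>_. True" p, OF fU sub dj M1r Tr])
    finally show ?thesis using wt_sum_one[OF fX(2)] by simp
  qed
  have P2: "gnp_prob n p M2 = (\<Sum>y\<in>Pow Y. wt p Y y * g y)"
  proof -
    have "gnp_prob n p M2 = (\<Sum>E\<in>Pow U. if True \<and> M2 E then wt p U E else 0)"
      unfolding gnp_eq U_def by simp
    also have "\<dots> = (\<Sum>y\<in>Pow Y. wt p Y y * (\<Sum>x\<in>Pow X. if True then wt p X x else 0) * g y)"
      unfolding g_def by (rule joint[of U X Y Z "\<lambda>_. True" M2 p, OF fU sub dj Tr M2r])
    finally show ?thesis using wt_sum_one[OF fX(1)] by simp
  qed
  have P12: "gnp_prob n p M2 = gnp_prob n p M1"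
    unfolding M1_def M2_def by (rule prob_eq[OF K'(1) K(1)]) (use K(2) K'(2) p01 in auto)
  have wnn: "\<And>y. 0 \<le> wt p Y y" using wt_nonneg p01 by blast
  have fnn: "\<And>y. 0 \<le> f y" unfolding f_def using wt_nonneg p01 by (auto intro: sum_nonneg)
  have gnn: "\<And>y. 0 \<le> g y" unfolding g_def using wt_nonneg p01 by (auto intro: sum_nonneg)
  obtain ys where ys: "ys \<in> Pow Y" and ymax: "\<And>y. y \<in> Pow Y \<Longrightarrow> g y \<le> g ys"
  proof -
    have fin: "finite (g ` Pow Y)" "g ` Pow Y \<noteq> {}" using fY by auto
    obtain ys where "ys \<in> Pow Y" "g ys = Max (g ` Pow Y)" using Max_in[OF fin] by auto
    then show ?thesis using that Max_ge[OF fin(1)] by auto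
  qed
  define P where "P = gnp_prob n p (\<lambda>E. M1 E \<and> M2 E)"
  define Q where "Q = gnp_prob n p M1"
  have Qnn: "0 \<le> Q" unfolding Q_def P1 using wnn fnn by (auto intro: sum_nonneg)
  have Pnn: "0 \<le> P" unfolding P_def PP using wnn fnn gnn by (auto intro: sum_nonneg)
  have Pb: "P \<le> Q * g ys"
  proof -
    have "P \<le> (\<Sum>y\<in>Pow Y. wt p Y y * f y * g ys)"
      unfolding P_def PP
      by (rule sum_mono) (use ymax wnn fnn in \<open>auto intro: mult_left_mono\<close>)
    also have "\<dots> = Q * g ys" unfolding Q_def P1 by (simp add: sum_distrib_right)
    finally show ?thesis .
  qed
  have Qb: "wt p Y ys * g ys \<le> Q"
  proof -
    have "wt p Y ys * g ys \<le> (\<Sum>y\<in>Pow Y. wt p Y y * g y)"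
      by (rule member_le_sum) (use ys fY wnn gnn in auto)
    then show ?thesis unfolding Q_def P12[symmetric] P2 .
  qed
  define c where "c = (0.5 - 2 * a) * real k * real i"
  have expo: "- (0.5 - 2 * a) * real k * real (card (K \<inter> K')) = - c"
    unfolding c_def i_def I_def by (simp add: algebra_simps)
  have RHSnn: "0 \<le> (1 - p) powr (- c) * Q ^ 2" by simp
  show ?thesis
  proof (cases "g ys = 0")
    case True
    then have "P \<le> 0" using Pb by simp
    then have "P \<le> (1 - p) powr (- c) * Q ^ 2" using RHSnn by linarith
    then show ?thesis unfolding expo P_def Q_def M1_def M2_def .
  next
    case False
    have "\<exists>z\<in>Pow Z. M2 (ys \<union> z)"
    proof (rule ccontr)
      assume "\<not> (\<exists>z\<in>Pow Z. M2 (ys \<union> z))"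
      then have "g ys = 0" unfolding g_def by (intro sum.neutral) auto
      then show False using False by simp
    qed
    then obtain z where z: "z \<in> Pow Z" "M2 (ys \<union> z)" by blast
    have inF: "in_F a k (ys \<union> z) K'" using z(2) unfolding M2_def .
    obtain A' P' where A'K: "A' \<subseteq> K'" and cA: "real (card A') = a * real k"
      and bip: "\<forall>x\<in>K'. \<forall>y\<in>K'. {x, y} \<in> ys \<union> z \<and> x \<noteq> y \<longrightarrow>
            (x \<in> A' \<and> y \<in> K' - A') \<or> (x \<in> K' - A' \<and> y \<in> A')"
      using inF unfolding in_F_def by (elim exE conjE) (rule that)
    have ysub: "ys \<subseteq> (\<lambda>(u, v). {u, v}) ` (A' \<times> I)"
    proof
      fix e assume e: "e \<in> ys"
      then have "e \<in> EK I" using ys unfolding Y_def by blast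
      then obtain u v where uv: "e = {u, v}" "u \<noteq> v" "u \<in> I" "v \<in> I"
        unfolding EK_def by (auto simp: card_2_iff)
      then have uvK: "u \<in> K'" "v \<in> K'" unfolding I_def by auto
      have "{u, v} \<in> ys \<union> z" using e uv by simp
      then have "(u \<in> A' \<and> v \<in> K' - A') \<or> (u \<in> K' - A' \<and> v \<in> A')" using bip uvK uv(2) by blast
      then show "e \<in> (\<lambda>(u, v). {u, v}) ` (A' \<times> I)"
      proof
        assume "u \<in> A' \<and> v \<in> K' - A'"
        then have "(u, v) \<in> A' \<times> I" using uv by simp
        then show ?thesis using uv(1) by force
      next
        assume "u \<in> K' - A' \<and> v \<in> A'"
        then have "(v, u) \<in> A' \<times> I" using uv by simp
        moreover have "e = {v, u}" using uv(1) by blast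
        ultimately show ?thesis by force
      qed
    qed
    have fA': "finite A'" using A'K fK finite_subset by blast
    have "card ys \<le> card ((\<lambda>(u, v). {u, v}) ` (A' \<times> I))"
      by (rule card_mono[OF _ ysub]) (use fA' fI in simp)
    also have "\<dots> \<le> card (A' \<times> I)" by (rule card_image_le) (use fA' fI in simp)
    finally have "card ys \<le> card (A' \<times> I)" .
    then have "card ys \<le> card A' * i" unfolding i_def by (simp add: card_cartesian_product)
    then have "real (card ys) \<le> real (card A') * real i" by (metis of_nat_le_iff of_nat_mult)
    then have ea: "real (card ys) \<le> a * real k * real i" using cA by simp
    have eN: "card ys \<le> card Y" using ys fY by (auto intro: card_mono)
    have NY: "card Y = i choose 2" unfolding Y_def i_def by (rule card_EK[OF fI])
    have "2 * (i * (i - 1) div 2) \<le> i * (i - 1)" by (rule times_div_less_eq_dividend)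
    also have "i * (i - 1) \<le> i * i" by (rule mult_le_mono2[OF diff_le_self])
    finally have "2 * card Y \<le> i * i" unfolding NY choose_two .
    then have Ni: "2 * real (card Y) \<le> real i * real i" by (metis of_nat_le_iff of_nat_mult of_nat_numeral)
    have ik: "real i \<le> (1 - 10 * a) * real k" using i_bound unfolding i_def I_def .
    have num: "(1 - p) powr c \<le> wt p Y ys"
      unfolding wt_def c_def by (rule numeric[OF p01(1,2) p4 eN ea Ni ik])
    have cpos: "0 < (1 - p) powr c" using p01 by simp
    have "1 = (1 - p) powr (- c) * (1 - p) powr c" using p01 by (simp add: powr_add[symmetric])
    also have "\<dots> \<le> (1 - p) powr (- c) * wt p Y ys" by (rule mult_left_mono[OF num]) simp
    finally have one: "1 \<le> (1 - p) powr (- c) * wt p Y ys" .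
    have "P \<le> P * ((1 - p) powr (- c) * wt p Y ys)" using one Pnn by (simp add: mult_le_cancel_left1)
    also have "\<dots> = (1 - p) powr (- c) * (P * wt p Y ys)" by (simp add: algebra_simps)
    also have "P * wt p Y ys \<le> Q * (wt p Y ys * g ys)"
      using mult_right_mono[OF Pb wnn[of ys]] by (simp add: algebra_simps)
    also have "\<dots> \<le> Q * Q" by (rule mult_left_mono[OF Qb Qnn])
    finally have "P \<le> (1 - p) powr (- c) * Q ^ 2" by (simp add: power2_eq_square mult_left_mono)
    then show ?thesis unfolding expo P_def Q_def M1_def M2_def .
  qed
qed


end
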